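(* Assume the setting described in the context, let $\gamma<\eta<\min\{\beta,\alpha\}$ with $K\,\mathrm{Lip}_u G\left(\frac{1}{\eta-\gamma}+\frac{1}{\beta-\eta}+\frac{1}{\alpha-\eta}\right)<1$, and let $M^c(\omega)=\{u_0\in H: u(\cdot,u_0,\omega)\in C_\eta\}=\{v+h^c(v,\omega):v\in H^c\}$ be the center manifold of the random equation $\frac{du}{dt}=Au+z(\theta_t\omega)u+G(\theta_t\omega,u)$. Then the random set \[ \widetilde M^c(\omega)=\{e^{z(\omega)}u: u\in M^c(\omega)\}=\{v+e^{z(\omega)}h^c(e^{-z(\omega)}v,\omega): v\in H^c\} \] is a center manifold for the stochastic evolution equation $\frac{du}{dt}=Au+F(u)+u\circ\dot W(t)$; in particular it is forward invariant under the random dynamical system $\hat u$ generated by that equation: $\hat u(t,\widetilde M^c(\omega),\omega)\subset\widetilde M^c(\theta_t\omega)$ for $t\ge0$.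
   Context: $H$ is a separable Hilbert space with norm $|\cdot|$. $A:D(A)\to H$ generates a strongly continuous semigroup $e^{At}$ satisfying an exponential trichotomy with exponents $\alpha>\gamma>0>-\gamma>-\beta$ and bound $K$: there are continuous projections $P^c,P^u,P^s$ with $P^c+P^u+P^s=\mathrm{id}$, $P^iP^j=0$ for $i\neq j$, each commuting with $e^{At}$ for $t\ge 0$; with $H^i=P^iH$, $e^{At}|_{H^i}$ is an isomorphism for $t\ge0$ (extended to $t<0$ by inversion); and $|e^{At}P^cv|\le Ke^{\gamma|t|}|P^cv|$ ($t\in\mathbb R$), $|e^{At}P^uv|\le Ke^{\alpha t}|P^uv|$ ($t\le0$), $|e^{At}P^sv|\le Ke^{-\beta t}|P^sv|$ ($t\ge0$). $F:H\to H$, $F(0)=0$, globally Lipschitz. $(\Omega,\mathcal F,\mathbb P,\{\theta_t\})$ is the Wiener shift of a two-sided scalar Wiener process $W$, restricted to a $\theta$-invariant full-measure set of paths with sublinear growth; $z(\omega)=-\mu\int_{-\infty}^0e^{\mu\tau}\omega(\tau)d\tau$ for fixed $\mu>0$, so $z(\theta_t\omega)$ is the stationary solution of $dz+\mu z\,dt=dW$. $G(\omega,u)=e^{-z(\omega)}F(e^{z(\omega)}u)$ with Lipschitz constant $\mathrm{Lip}_uG$ in $u$. $\Psi_A(t,s)=\exp[A(t-s)+\int_s^tz(\theta_r\omega)dr]$; $u(t,u_0,\omega)$ is the mild solution $u(t)=\Psi_A(t,0)u_0+\int_0^t\Psi_A(t,s)G(\theta_s\omega,u(s))ds$. $C_\eta$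 is the Banach space of $\phi\in C(\mathbb R,H)$ with $\sup_t \exp[-\eta|t|-\int_0^tz(\theta_r\omega)dr]|\phi(t)|<\infty$. The random dynamical system of the Stratonovich equation $\frac{du}{dt}=Au+F(u)+u\circ\dot W$ is $\hat u(t,v,\omega)=e^{z(\theta_t\omega)}u(t,e^{-z(\omega)}v,\omega)$. A center manifold of a random dynamical system $\phi$ is a forward invariant random set ($\phi(t,M(\omega),\omega)\subset M(\theta_t\omega)$, $t\ge0$) of the form $\{v+h(v,\omega):v\in H^c\}$ with $h(\cdot,\omega):H^c\to H^u\oplus H^s$ Lipschitz, $h(0,\omega)=0$, and $h(v,\cdot)$ measurable. *)

theory Defs
  imports "HOL-Probability.Probability"
begin

definition shift :: "real \<Rightarrow> (real \<Rightarrow> real) \<Rightarrow> (real \<Rightarrow> real)" where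
  "shift t \<omega> = (\<lambda>s. \<omega> (s + t) - \<omega> t)"

definition sublinear_paths :: "(real \<Rightarrow> real) set" where
  "sublinear_paths = {\<omega>. continuous_on UNIV \<omega> \<and> \<omega> 0 = 0 \<and>
      ((\<lambda>t. \<omega> t / t) \<longlongrightarrow> 0) at_top \<and> ((\<lambda>t. \<omega> t / t) \<longlongrightarrow> 0) at_bot}"

text \<open>P is the (restricted) two-sided Wiener measure: its sample space is a shift-invariant
  set of sublinearly growing paths, the sigma algebra is generated by the evaluations
  (trace of the Borel sets of the compact-open topology), and the coordinate process is a
  two-sided scalar Wiener process (independent centred Gaussian increments of variance t - s).\<close>
definition wiener_shift_space :: "(real \<Rightarrow> real) measure \<Rightarrow> bool" where
  "wiener_shift_space P \<longleftrightarrow> prob_space P \<and> space P \<subseteq> sublinear_paths \<and>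
     (\<forall>t. \<forall>\<omega>\<in>space P. shift t \<omega> \<in> space P) \<and>
     sets P = sigma_sets (space P) {{\<omega>\<in>space P. \<omega> t \<in> B} | t B. B \<in> sets (borel :: real measure)} \<and>
     (\<forall>s t. s < t \<longrightarrow> distributed P lborel (\<lambda>\<omega>. \<omega> t - \<omega> s)
                          (\<lambda>x. ennreal (normal_density 0 (sqrt (t - s)) x))) \<and>
     (\<forall>ts::real list. sorted ts \<longrightarrow> distinct ts \<longrightarrow>
        prob_space.indep_vars P (\<lambda>_. borel :: real measure)
           (\<lambda>i \<omega>. \<omega> (ts ! Suc i) - \<omega> (ts ! i)) {..<length ts - 1})"

text \<open>Stationary Ornstein-Uhlenbeck variable z(omega).\<close>
definition ou :: "real \<Rightarrow> (real \<Rightarrow> real) \<Rightarrow> real" where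
  "ou \<mu> \<omega> = - \<mu> * integral {..0} (\<lambda>\<tau>. exp (\<mu> * \<tau>) * \<omega> \<tau>)"

definition oint :: "real \<Rightarrow> real \<Rightarrow> (real \<Rightarrow> real) \<Rightarrow> real" where
  "oint a b f = (if a \<le> b then integral {a..b} f else - integral {b..a} f)"

definition C0_semigroup :: "(real \<Rightarrow> 'a::real_normed_vector \<Rightarrow> 'a) \<Rightarrow> bool" where
  "C0_semigroup T \<longleftrightarrow> (\<forall>t\<ge>0. bounded_linear (T t)) \<and> T 0 = id \<and>
     (\<forall>s\<ge>0. \<forall>t\<ge>0. T (s + t) = T s \<circ> T t) \<and> (\<forall>x. continuous_on {0..} (\<lambda>t. T t x))"

definition generates :: "'a::real_normed_vector set \<Rightarrow> ('a \<Rightarrow> 'a) \<Rightarrow> (real \<Rightarrow> 'a \<Rightarrow> 'a) \<Rightarrow> bool" where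
  "generates D A T \<longleftrightarrow> C0_semigroup T \<and>
     D = {x. \<exists>y. ((\<lambda>t. (T t x - x) /\<^sub>R t) \<longlongrightarrow> y) (at_right 0)} \<and>
     (\<forall>x\<in>D. ((\<lambda>t. (T t x - x) /\<^sub>R t) \<longlongrightarrow> A x) (at_right 0))"

definition ext_group :: "(real \<Rightarrow> 'a \<Rightarrow> 'a) \<Rightarrow> ('a \<Rightarrow> 'a) \<Rightarrow> real \<Rightarrow> 'a \<Rightarrow> 'a" where
  "ext_group T P t v = (if 0 \<le> t then T t v else (THE w. w \<in> range P \<and> T (- t) w = v))"

definition exp_trichotomy :: "(real \<Rightarrow> 'a::real_normed_vector \<Rightarrow> 'a) \<Rightarrow> ('a \<Rightarrow> 'a) \<Rightarrow> ('a \<Rightarrow> 'a) \<Rightarrow>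
    ('a \<Rightarrow> 'a) \<Rightarrow> real \<Rightarrow> real \<Rightarrow> real \<Rightarrow> real \<Rightarrow> bool" where
  "exp_trichotomy T Pc Pu Ps \<alpha> \<beta> \<gamma> K \<longleftrightarrow> \<alpha> > \<gamma> \<and> \<gamma> > 0 \<and> - \<gamma> > - \<beta> \<and>
     bounded_linear Pc \<and> bounded_linear Pu \<and> bounded_linear Ps \<and>
     (\<forall>x. Pc x + Pu x + Ps x = x) \<and>
     (\<forall>x. Pc (Pu x) = 0 \<and> Pc (Ps x) = 0 \<and> Pu (Pc x) = 0 \<and> Pu (Ps x) = 0 \<and>
          Ps (Pc x) = 0 \<and> Ps (Pu x) = 0) \<and>
     (\<forall>t\<ge>0. \<forall>x. T t (Pc x) = Pc (T t x) \<and> T t (Pu x) = Pu (T t x) \<and> T t (Ps x) = Ps (T t x)) \<and>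
     (\<forall>t\<ge>0. bij_betw (T t) (range Pc) (range Pc) \<and> bij_betw (T t) (range Pu) (range Pu)) \<and>
     (\<forall>t v. norm (ext_group T Pc t (Pc v)) \<le> K * exp (\<gamma> * \<bar>t\<bar>) * norm (Pc v)) \<and>
     (\<forall>t\<le>0. \<forall>v. norm (ext_group T Pu t (Pu v)) \<le> K * exp (\<alpha> * t) * norm (Pu v)) \<and>
     (\<forall>t\<ge>0. \<forall>v. norm (T t (Ps v)) \<le> K * exp (- \<beta> * t) * norm (Ps v))"

definition Gfun :: "real \<Rightarrow> ('a::real_normed_vector \<Rightarrow> 'a) \<Rightarrow> (real \<Rightarrow> real) \<Rightarrow> 'a \<Rightarrow> 'a" where
  "Gfun \<mu> F \<omega> u = exp (- ou \<mu> \<omega>) *\<^sub>R F (exp (ou \<mu> \<omega>) *\<^sub>R u)"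

definition Psi :: "(real \<Rightarrow> 'a::real_normed_vector \<Rightarrow> 'a) \<Rightarrow> real \<Rightarrow> (real \<Rightarrow> real) \<Rightarrow> real \<Rightarrow> real \<Rightarrow> 'a \<Rightarrow> 'a" where
  "Psi T \<mu> \<omega> t s v = exp (oint s t (\<lambda>r. ou \<mu> (shift r \<omega>))) *\<^sub>R T (t - s) v"

definition mild_fwd :: "(real \<Rightarrow> 'a::banach \<Rightarrow> 'a) \<Rightarrow> real \<Rightarrow> ('a \<Rightarrow> 'a) \<Rightarrow> (real \<Rightarrow> real) \<Rightarrow>
    'a \<Rightarrow> (real \<Rightarrow> 'a) \<Rightarrow> bool" where
  "mild_fwd T \<mu> F \<omega> u0 u \<longleftrightarrow> continuous_on {0..} u \<and>
     (\<forall>t\<ge>0. u t = Psi T \<mu> \<omega> t 0 u0 +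
        integral {0..t} (\<lambda>s. Psi T \<mu> \<omega> t s (Gfun \<mu> F (shift s \<omega>) (u s))))"

definition usol :: "(real \<Rightarrow> 'a::banach \<Rightarrow> 'a) \<Rightarrow> real \<Rightarrow> ('a \<Rightarrow> 'a) \<Rightarrow> real \<Rightarrow> 'a \<Rightarrow> (real \<Rightarrow> real) \<Rightarrow> 'a" where
  "usol T \<mu> F t u0 \<omega> = (THE x. \<exists>u. mild_fwd T \<mu> F \<omega> u0 u \<and> x = u t)"

text \<open>The random dynamical system of the Stratonovich equation.\<close>
definition uhat :: "(real \<Rightarrow> 'a::banach \<Rightarrow> 'a) \<Rightarrow> real \<Rightarrow> ('a \<Rightarrow> 'a) \<Rightarrow> real \<Rightarrow> 'a \<Rightarrow> (real \<Rightarrow> real) \<Rightarrow> 'a" where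
  "uhat T \<mu> F t v \<omega> = exp (ou \<mu> (shift t \<omega>)) *\<^sub>R usol T \<mu> F t (exp (- ou \<mu> \<omega>) *\<^sub>R v) \<omega>"

definition Ceta :: "real \<Rightarrow> real \<Rightarrow> (real \<Rightarrow> real) \<Rightarrow> (real \<Rightarrow> 'a::real_normed_vector) set" where
  "Ceta \<mu> \<eta> \<omega> = {\<phi>. continuous_on UNIV \<phi> \<and>
      bdd_above (range (\<lambda>t. exp (- \<eta> * \<bar>t\<bar> - oint 0 t (\<lambda>r. ou \<mu> (shift r \<omega>))) * norm (\<phi> t)))}"

definition mild_whole :: "(real \<Rightarrow> 'a::banach \<Rightarrow> 'a) \<Rightarrow> real \<Rightarrow> ('a \<Rightarrow> 'a) \<Rightarrow> (real \<Rightarrow> real) \<Rightarrow>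
    (real \<Rightarrow> 'a) \<Rightarrow> bool" where
  "mild_whole T \<mu> F \<omega> \<phi> \<longleftrightarrow> continuous_on UNIV \<phi> \<and>
     (\<forall>s t. s \<le> t \<longrightarrow> \<phi> t = Psi T \<mu> \<omega> t s (\<phi> s) +
        integral {s..t} (\<lambda>r. Psi T \<mu> \<omega> t r (Gfun \<mu> F (shift r \<omega>) (\<phi> r))))"

definition Mcenter :: "(real \<Rightarrow> 'a::banach \<Rightarrow> 'a) \<Rightarrow> real \<Rightarrow> ('a \<Rightarrow> 'a) \<Rightarrow> real \<Rightarrow> (real \<Rightarrow> real) \<Rightarrow> 'a set" where
  "Mcenter T \<mu> F \<eta> \<omega> = {u0. \<exists>\<phi>\<in>Ceta \<mu> \<eta> \<omega>. \<phi> 0 = u0 \<and> mild_whole T \<mu> F \<omega> \<phi>}"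

definition cm_graph :: "(real \<Rightarrow> real) measure \<Rightarrow> ('a::real_normed_vector \<Rightarrow> 'a) \<Rightarrow> ('a \<Rightarrow> 'a) \<Rightarrow> ('a \<Rightarrow> 'a) \<Rightarrow>
    (real \<Rightarrow> 'a \<Rightarrow> (real \<Rightarrow> real) \<Rightarrow> 'a) \<Rightarrow> ('a \<Rightarrow> (real \<Rightarrow> real) \<Rightarrow> 'a) \<Rightarrow> bool" where
  "cm_graph P Pc Pu Ps \<phi> h \<longleftrightarrow>
     (let M = (\<lambda>\<omega>. {v + h v \<omega> | v. v \<in> range Pc}) in
       (\<forall>\<omega>\<in>space P. (\<forall>v\<in>range Pc. h v \<omega> \<in> range (\<lambda>x. Pu x + Ps x)) \<and>
           (\<exists>L. L-lipschitz_on (range Pc) (\<lambda>v. h v \<omega>)) \<and> h 0 \<omega> = 0) \<and>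
       (\<forall>v\<in>range Pc. (\<lambda>\<omega>. h v \<omega>) \<in> borel_measurable P) \<and>
       (\<forall>x. (\<lambda>\<omega>. infdist x (M \<omega>)) \<in> borel_measurable P) \<and>
       (\<forall>\<omega>\<in>space P. \<forall>t\<ge>0. (\<lambda>x. \<phi> t x \<omega>) ` M \<omega> \<subseteq> M (shift t \<omega>)))"

end

theory Submission imports Defs begin
lemma floor_seq_lim:
  fixes c :: real
  shows "(\<lambda>n. real_of_int \<lfloor>real (Suc n) * c\<rfloor> / real (Suc n)) \<longlonglongrightarrow> c"
proof (rule tendsto_sandwich[where f="\<lambda>n. c - 1 / real (Suc n)" and h="\<lambda>n. c"])
  show "\<forall>\<^sub>F n in sequentially. c - 1 / real (Suc n) \<le> real_of_int \<lfloor>real (Suc n) * c\<rfloor> / real (Suc n)"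
  proof (intro always_eventually allI)
    fix n
    have "real (Suc n) * c - 1 \<le> real_of_int \<lfloor>real (Suc n) * c\<rfloor>" by linarith
    then have "(real (Suc n) * c - 1) / real (Suc n) \<le> real_of_int \<lfloor>real (Suc n) * c\<rfloor> / real (Suc n)"
      by (intro divide_right_mono) auto
    moreover have "(real (Suc n) * c - 1) / real (Suc n) = c - 1 / real (Suc n)"
      by (simp add: field_simps)
    ultimately show "c - 1 / real (Suc n) \<le> real_of_int \<lfloor>real (Suc n) * c\<rfloor> / real (Suc n)"
      by simp
  qed
  show "\<forall>\<^sub>F n in sequentially. real_of_int \<lfloor>real (Suc n) * c\<rfloor> / real (Suc n) \<le> c"
  proof (intro always_eventually allI)
    fix n
    have "real_of_int \<lfloor>real (Suc n) * c\<rfloor> \<le> real (Suc n) * c" by linarith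
    then show "real_of_int \<lfloor>real (Suc n) * c\<rfloor> / real (Suc n) \<le> c"
      by (simp add: field_simps)
  qed
  have "(\<lambda>n. 1 / real (Suc n)) \<longlonglongrightarrow> 0" using LIMSEQ_inverse_real_of_nat by (simp add: inverse_eq_divide)
  then show "(\<lambda>n. c - 1 / real (Suc n)) \<longlonglongrightarrow> c" using tendsto_diff[of "\<lambda>n. c" c sequentially] by force
qed simp

lemma meas_ray:
  fixes f :: "real \<Rightarrow> 'm \<Rightarrow> 'c::metric_space"
  assumes c: "c \<in> borel_measurable M"
    and f: "\<And>q. f q \<in> borel_measurable M"
    and cont: "\<And>x. x \<in> space M \<Longrightarrow> continuous_on UNIV (\<lambda>q. f q x)"
  shows "(\<lambda>x. f (c x) x) \<in> borel_measurable M"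
proof (rule borel_measurable_LIMSEQ_metric)
  fix n :: nat
  have g: "(\<lambda>x. \<lfloor>real (Suc n) * c x\<rfloor>) \<in> measurable M (count_space UNIV)"
    by (rule measurable_compose[OF _ measurable_real_floor]) (use c in measurable)
  show "(\<lambda>x. f (real_of_int \<lfloor>real (Suc n) * c x\<rfloor> / real (Suc n)) x) \<in> borel_measurable M"
    by (rule measurable_compose_countable[where f="\<lambda>i x. f (real_of_int i / real (Suc n)) x", OF _ g])
       (rule f)
next
  fix x assume x: "x \<in> space M"
  have "isCont (\<lambda>q. f q x) (c x)"
    using cont[OF x] by (simp add: continuous_on_eq_continuous_at)
  then show "(\<lambda>n. f (real_of_int \<lfloor>real (Suc n) * c x\<rfloor> / real (Suc n)) x) \<longlonglongrightarrow> f (c x) x"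
    by (rule isCont_tendsto_compose) (rule floor_seq_lim)
qed

lemma eval_meas:
  assumes "wiener_shift_space P"
  shows "(\<lambda>\<omega>. \<omega> t) \<in> borel_measurable P"
proof (rule measurableI)
  fix A :: "real set" assume "A \<in> sets borel"
  then have "{\<omega>\<in>space P. \<omega> t \<in> A} \<in> sigma_sets (space P) {{\<omega>\<in>space P. \<omega> t \<in> B} | t B. B \<in> sets (borel :: real measure)}"
    by (intro sigma_sets.Basic) blast
  then show "(\<lambda>\<omega>. \<omega> t) -` A \<inter> space P \<in> sets P"
    using assms unfolding wiener_shift_space_def by (simp add: vimage_def Int_def conj_commute)
qed simp

lemma joint_meas:
  assumes w: "wiener_shift_space P"
  shows "(\<lambda>p. fst p (snd p)) \<in> borel_measurable (P \<Otimes>\<^sub>M lborel)"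
proof -
  have "(\<lambda>p. (\<lambda>q. fst p q) (snd p)) \<in> borel_measurable (P \<Otimes>\<^sub>M lborel)"
  proof (rule meas_ray[where f="\<lambda>q p. fst p q" and c=snd])
    fix q show "(\<lambda>p. fst p q) \<in> borel_measurable (P \<Otimes>\<^sub>M lborel)"
      by (rule measurable_compose[OF measurable_fst eval_meas[OF w]])
  next
    fix x assume "x \<in> space (P \<Otimes>\<^sub>M lborel)"
    then have "fst x \<in> space P" by (simp add: space_pair_measure mem_Times_iff)
    then show "continuous_on UNIV (\<lambda>q. fst x q)"
      using w unfolding wiener_shift_space_def sublinear_paths_def by auto
  qed simp
  then show ?thesis by simp
qed

lemma exp_half_int:
  fixes \<mu> :: real assumes mu: "\<mu> > 0"
  shows "(\<lambda>x. exp (\<mu> / 2 * x)) absolutely_integrable_on {..0}"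
proof -
  have i: "(\<lambda>x. exp (- (\<mu>/2) * x)) integrable_on {0..}"
    using integrable_on_exp_minus_to_infinity[of "\<mu>/2" 0] mu by simp
  have "(\<lambda>x. exp (- (\<mu>/2) * x)) absolutely_integrable_on {0..}"
    by (rule nonnegative_absolutely_integrable_1[OF i]) simp
  then have "(\<lambda>x. exp (\<mu> / 2 * (- x))) absolutely_integrable_on {0..} \<and>
      integral {0..} (\<lambda>x. exp (\<mu> / 2 * (- x))) = integral {0..} (\<lambda>x. exp (- (\<mu>/2) * x))"
    by simp
  moreover have "uminus ` {0::real..} \<subseteq> {..0}" "uminus ` {..0::real} \<subseteq> {0..}" by auto
  moreover have "{0::real..} \<in> sets lebesgue" by simp
  ultimately show ?thesis
    using has_absolute_integral_reflect_real[of "{0..}" "{..0::real}" "\<lambda>x. exp (\<mu> / 2 * x)"]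
    by blast
qed

lemma lim_aux:
  fixes \<mu> :: real assumes mu: "\<mu> > 0"
  shows "((\<lambda>\<tau>. \<tau> * exp (\<mu> / 2 * \<tau>)) \<longlongrightarrow> 0) at_bot"
proof -
  have f: "filterlim (\<lambda>\<tau>. (\<mu>/2) * (- \<tau>)) at_top at_bot"
    by (rule filterlim_tendsto_pos_mult_at_top[OF tendsto_const _ filterlim_uminus_at_top_at_bot]) (use mu in simp)
  have "((\<lambda>\<tau>. ((\<mu>/2) * (- \<tau>)) ^ 1 / exp ((\<mu>/2) * (- \<tau>))) \<longlongrightarrow> 0) at_bot"
    by (rule filterlim_compose[OF tendsto_power_div_exp_0 f])
  then have "((\<lambda>\<tau>. (- (2/\<mu>)) * (((\<mu>/2) * (- \<tau>)) ^ 1 / exp ((\<mu>/2) * (- \<tau>)))) \<longlongrightarrow> (- (2/\<mu>)) * 0) at_bot"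
    by (intro tendsto_mult tendsto_const)
  moreover have "(- (2/\<mu>)) * (((\<mu>/2) * (- \<tau>)) ^ 1 / exp ((\<mu>/2) * (- \<tau>))) = \<tau> * exp (\<mu> / 2 * \<tau>)" for \<tau>
    using mu by (simp add: field_simps exp_minus)
  ultimately show ?thesis by simp
qed

lemma ou_integrable:
  fixes \<mu> :: real
  assumes w: "\<omega> \<in> sublinear_paths" and mu: "\<mu> > 0"
  shows "(\<lambda>\<tau>. exp (\<mu> * \<tau>) * \<omega> \<tau>) absolutely_integrable_on {..0}"
proof -
  have cont: "continuous_on UNIV \<omega>" and l1: "((\<lambda>t. \<omega> t / t) \<longlongrightarrow> 0) at_bot"
    using w unfolding sublinear_paths_def by auto
  have "((\<lambda>\<tau>. (\<omega> \<tau> / \<tau>) * (\<tau> * exp (\<mu> / 2 * \<tau>))) \<longlongrightarrow> 0 * 0) at_bot"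
    by (intro tendsto_mult l1 lim_aux mu)
  moreover have "\<forall>\<^sub>F \<tau> in at_bot. (\<omega> \<tau> / \<tau>) * (\<tau> * exp (\<mu> / 2 * \<tau>)) = exp (\<mu> / 2 * \<tau>) * \<omega> \<tau>"
    unfolding eventually_at_bot_linorder by (rule exI[of _ "-1"]) auto
  ultimately have "((\<lambda>\<tau>. exp (\<mu> / 2 * \<tau>) * \<omega> \<tau>) \<longlongrightarrow> 0) at_bot"
    using tendsto_cong by fastforce
  then have "\<forall>\<^sub>F \<tau> in at_bot. dist (exp (\<mu> / 2 * \<tau>) * \<omega> \<tau>) 0 < 1"
    by (rule tendstoD) simp
  then obtain R where R: "\<And>\<tau>. \<tau> \<le> R \<Longrightarrow> \<bar>exp (\<mu> / 2 * \<tau>) * \<omega> \<tau>\<bar> < 1"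
    unfolding eventually_at_bot_linorder by auto
  have "compact (\<omega> ` {min R 0..0})"
    by (rule compact_continuous_image) (use cont continuous_on_subset in auto)
  then obtain B where B: "\<And>x. x \<in> \<omega> ` {min R 0..0} \<Longrightarrow> norm x \<le> B"
    using compact_imp_bounded bounded_iff by metis
  have B0: "0 \<le> B" using B[of "\<omega> 0"] by force
  have bound: "\<bar>exp (\<mu> * \<tau>) * \<omega> \<tau>\<bar> \<le> (B + 1) * exp (\<mu> / 2 * \<tau>)" if t: "\<tau> \<le> 0" for \<tau>
  proof (cases "\<tau> \<le> R")
    case True
    have "\<bar>exp (\<mu> * \<tau>) * \<omega> \<tau>\<bar> = exp (\<mu> / 2 * \<tau>) * \<bar>exp (\<mu> / 2 * \<tau>) * \<omega> \<tau>\<bar>"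
      by (simp add: abs_mult mult.assoc[symmetric] exp_add[symmetric])
    also have "\<dots> \<le> exp (\<mu> / 2 * \<tau>) * 1"
      using R[OF True] by (intro mult_left_mono) auto
    also have "\<dots> \<le> (B + 1) * exp (\<mu> / 2 * \<tau>)" using B0 by simp
    finally show ?thesis .
  next
    case False
    then have "\<bar>\<omega> \<tau>\<bar> \<le> B" using B[of "\<omega> \<tau>"] t by auto
    have e: "exp (\<mu> * \<tau>) \<le> exp (\<mu> / 2 * \<tau>)" using mu t by (simp add: mult_nonpos_nonneg)
    have "\<bar>exp (\<mu> * \<tau>) * \<omega> \<tau>\<bar> = exp (\<mu> * \<tau>) * \<bar>\<omega> \<tau>\<bar>" by (simp add: abs_mult)
    also have "\<dots> \<le> exp (\<mu> / 2 * \<tau>) * B"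
      using e \<open>\<bar>\<omega> \<tau>\<bar> \<le> B\<close> B0 by (intro mult_mono) auto
    also have "\<dots> \<le> (B + 1) * exp (\<mu> / 2 * \<tau>)" by simp
    finally show ?thesis .
  qed
  have gi: "set_integrable lebesgue {..0} (\<lambda>x. (B + 1) * exp (\<mu> / 2 * x))"
    using exp_half_int[OF mu] B0 by (intro set_integrable_mult_right) auto
  have om: "\<omega> \<in> borel_measurable borel" by (rule borel_measurable_continuous_onI[OF cont])
  show ?thesis
    unfolding set_integrable_def
  proof (rule Bochner_Integration.integrable_bound[OF gi[unfolded set_integrable_def] _ AE_I2])
    show "(\<lambda>x. indicat_real {..0} x *\<^sub>R (exp (\<mu> * x) * \<omega> x)) \<in> borel_measurable lebesgue"
      by (intro measurable_completion) (use om in measurable)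
    fix x :: real
    show "norm (indicat_real {..0} x *\<^sub>R (exp (\<mu> * x) * \<omega> x))
        \<le> norm (indicat_real {..0} x *\<^sub>R ((B + 1) * exp (\<mu> / 2 * x)))"
      using bound[of x] B0 by (auto simp: indicator_def)
  qed
qed

lemma ou_meas:
  assumes w: "wiener_shift_space P" and mu: "\<mu> > 0"
  shows "ou \<mu> \<in> borel_measurable P"
proof -
  let ?g = "\<lambda>\<omega>. - \<mu> * (\<integral>\<tau>. indicator {..0} \<tau> *\<^sub>R (exp (\<mu> * \<tau>) * \<omega> \<tau>) \<partial>lborel)"
  have eq: "ou \<mu> \<omega> = ?g \<omega>" if om: "\<omega> \<in> space P" for \<omega>
  proof -
    have sl: "\<omega> \<in> sublinear_paths" using om w unfolding wiener_shift_space_def by auto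
    then have cont: "continuous_on UNIV \<omega>" unfolding sublinear_paths_def by auto
    have ombor: "\<omega> \<in> borel_measurable borel" by (rule borel_measurable_continuous_onI[OF cont])
    have "integral {..0} (\<lambda>\<tau>. exp (\<mu> * \<tau>) * \<omega> \<tau>) = (LINT x:{..0} | lebesgue. exp (\<mu> * x) * \<omega> x)"
      using set_lebesgue_integral_eq_integral(2)[OF ou_integrable[OF sl mu]] by simp
    also have "\<dots> = (\<integral>\<tau>. indicator {..0} \<tau> *\<^sub>R (exp (\<mu> * \<tau>) * \<omega> \<tau>) \<partial>lebesgue)"
      by (simp add: set_lebesgue_integral_def)
    also have "\<dots> = (\<integral>\<tau>. indicator {..0} \<tau> *\<^sub>R (exp (\<mu> * \<tau>) * \<omega> \<tau>) \<partial>lborel)"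
      by (rule integral_completion) (use ombor in measurable)
    finally show ?thesis unfolding ou_def by simp
  qed
  have j: "(\<lambda>p. fst p (snd p)) \<in> borel_measurable (P \<Otimes>\<^sub>M lborel)" by (rule joint_meas[OF w])
  have "case_prod (\<lambda>\<omega> \<tau>. indicator {..0} \<tau> *\<^sub>R (exp (\<mu> * \<tau>) * \<omega> \<tau>)) \<in> borel_measurable (P \<Otimes>\<^sub>M lborel)"
  proof -
    have "(\<lambda>p. indicator {..0} (snd p) *\<^sub>R (exp (\<mu> * snd p) * fst p (snd p))) \<in> borel_measurable (P \<Otimes>\<^sub>M lborel)"
      using j by measurable
    then show ?thesis by (simp add: case_prod_beta')
  qed
  then have "(\<lambda>\<omega>. \<integral>\<tau>. indicator {..0} \<tau> *\<^sub>R (exp (\<mu> * \<tau>) * \<omega> \<tau>) \<partial>lborel) \<in> borel_measurable P"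
    by (rule lborel.borel_measurable_lebesgue_integral)
  then have "?g \<in> borel_measurable P" by measurable
  then show ?thesis using eq measurable_cong by (smt (verit))
qed

lemma infdist_scale:
  fixes x :: "'a::real_normed_vector"
  assumes c: "c > 0"
  shows "infdist (c *\<^sub>R x) ((\<lambda>y. c *\<^sub>R y) ` S) = c * infdist x S"
proof (cases "S = {}")
  case True then show ?thesis by (simp add: infdist_def)
next
  case False
  have d: "dist (c *\<^sub>R x) (c *\<^sub>R a) = c * dist x a" for a
    using c by (simp add: dist_norm scaleR_diff_right[symmetric])
  have "infdist (c *\<^sub>R x) ((\<lambda>y. c *\<^sub>R y) ` S) = (INF a\<in>S. c * dist x a)"
    using False by (simp add: infdist_notempty image_image d)
  also have "\<dots> = c * (INF a\<in>S. dist x a)"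
  proof (rule antisym)
    show "(INF a\<in>S. c * dist x a) \<le> c * (INF a\<in>S. dist x a)"
    proof -
      have "(INF a\<in>S. c * dist x a) / c \<le> (INF a\<in>S. dist x a)"
      proof (rule cINF_greatest[OF False])
        fix a assume "a \<in> S"
        then have "(INF a\<in>S. c * dist x a) \<le> c * dist x a"
          by (intro cINF_lower) (use c in \<open>auto intro!: bdd_belowI[of _ 0]\<close>)
        then show "(INF a\<in>S. c * dist x a) / c \<le> dist x a" using c by (simp add: field_simps)
      qed
      then show ?thesis using c by (simp add: field_simps)
    qed
    show "c * (INF a\<in>S. dist x a) \<le> (INF a\<in>S. c * dist x a)"
    proof (rule cINF_greatest[OF False])
      fix a assume "a \<in> S"
      then have "(INF a\<in>S. dist x a) \<le> dist x a"
        by (intro cINF_lower) (auto intro!: bdd_belowI[of _ 0])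
      then show "c * (INF a\<in>S. dist x a) \<le> c * dist x a" using c by simp
    qed
  qed
  finally show ?thesis using False by (simp add: infdist_notempty)
qed

lemma graph_scale:
  fixes Pc h :: "'a::real_normed_vector \<Rightarrow> 'a" and e :: real
  assumes lin: "bounded_linear Pc" and e: "e \<noteq> 0"
  shows "(\<lambda>x. e *\<^sub>R x) ` {v + h v | v. v \<in> range Pc} = {v + e *\<^sub>R h (inverse e *\<^sub>R v) | v. v \<in> range Pc}"
proof -
  interpret bounded_linear Pc by (rule lin)
  show ?thesis
  proof (intro set_eqI iffI)
    fix x assume "x \<in> (\<lambda>x. e *\<^sub>R x) ` {v + h v | v. v \<in> range Pc}"
    then obtain y where x: "x = e *\<^sub>R (Pc y + h (Pc y))" by auto
    have "x = Pc (e *\<^sub>R y) + e *\<^sub>R h (inverse e *\<^sub>R Pc (e *\<^sub>R y))"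
      using e by (simp add: x scaleR scaleR_add_right)
    then show "x \<in> {v + e *\<^sub>R h (inverse e *\<^sub>R v) | v. v \<in> range Pc}" by blast
  next
    fix x assume "x \<in> {v + e *\<^sub>R h (inverse e *\<^sub>R v) | v. v \<in> range Pc}"
    then obtain y where x: "x = Pc y + e *\<^sub>R h (inverse e *\<^sub>R Pc y)" by auto
    have "x = e *\<^sub>R (Pc (inverse e *\<^sub>R y) + h (Pc (inverse e *\<^sub>R y)))"
      using e by (simp add: x scaleR scaleR_add_right)
    then show "x \<in> (\<lambda>x. e *\<^sub>R x) ` {v + h v | v. v \<in> range Pc}" by blast
  qed
qed

theorem theorem3p2:
  fixes T :: "real \<Rightarrow> 'a::{real_inner,banach} \<Rightarrow> 'a"
    and A :: "'a \<Rightarrow> 'a" and D :: "'a set"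
    and Pc Pu Ps F :: "'a \<Rightarrow> 'a"
    and P :: "(real \<Rightarrow> real) measure"
    and \<alpha> \<beta> \<gamma> K \<mu> \<eta> LipG :: real
    and hc :: "'a \<Rightarrow> (real \<Rightarrow> real) \<Rightarrow> 'a"
  assumes separable: "\<exists>S::'a set. countable S \<and> closure S = UNIV"
    and gen: "generates D A T"
    and trich: "exp_trichotomy T Pc Pu Ps \<alpha> \<beta> \<gamma> K"
    and F0: "F 0 = 0"
    and F_lip: "\<exists>LF. LF-lipschitz_on UNIV F"
    and wiener: "wiener_shift_space P"
    and mu: "\<mu> > 0"
    and G_lip: "\<forall>\<omega>\<in>space P. LipG-lipschitz_on UNIV (Gfun \<mu> F \<omega>)"
    and eta: "\<gamma> < \<eta>" "\<eta> < min \<beta> \<alpha>"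
    and gap: "K * LipG * (1 / (\<eta> - \<gamma>) + 1 / (\<beta> - \<eta>) + 1 / (\<alpha> - \<eta>)) < 1"
    and Mc_graph: "\<forall>\<omega>\<in>space P. Mcenter T \<mu> F \<eta> \<omega> = {v + hc v \<omega> | v. v \<in> range Pc}"
    and Mc_cm: "cm_graph P Pc Pu Ps (usol T \<mu> F) hc"
  shows "(\<forall>\<omega>\<in>space P. (\<lambda>x. exp (ou \<mu> \<omega>) *\<^sub>R x) ` Mcenter T \<mu> F \<eta> \<omega> =
            {v + exp (ou \<mu> \<omega>) *\<^sub>R hc (exp (- ou \<mu> \<omega>) *\<^sub>R v) \<omega> | v. v \<in> range Pc})
    \<and> cm_graph P Pc Pu Ps (uhat T \<mu> F) (\<lambda>v \<omega>. exp (ou \<mu> \<omega>) *\<^sub>R hc (exp (- ou \<mu> \<omega>) *\<^sub>R v) \<omega>)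
    \<and> (\<forall>\<omega>\<in>space P. \<forall>t\<ge>0.
         (\<lambda>x. uhat T \<mu> F t x \<omega>) ` ((\<lambda>x. exp (ou \<mu> \<omega>) *\<^sub>R x) ` Mcenter T \<mu> F \<eta> \<omega>)
           \<subseteq> (\<lambda>x. exp (ou \<mu> (shift t \<omega>)) *\<^sub>R x) ` Mcenter T \<mu> F \<eta> (shift t \<omega>))"
proof -
  let ?z = "\<lambda>\<omega>. ou \<mu> \<omega>"
  let ?M = "\<lambda>\<omega>. {v + hc v \<omega> | v. v \<in> range Pc}"
  let ?h = "\<lambda>v \<omega>. exp (ou \<mu> \<omega>) *\<^sub>R hc (exp (- ou \<mu> \<omega>) *\<^sub>R v) \<omega>"
  let ?M' = "\<lambda>\<omega>. {v + ?h v \<omega> | v. v \<in> range Pc}"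
  have linc: "bounded_linear Pc" and linu: "bounded_linear Pu" and lins: "bounded_linear Ps"
    using trich unfolding exp_trichotomy_def by auto
  interpret Pc: bounded_linear Pc by (rule linc)
  interpret Pu: bounded_linear Pu by (rule linu)
  interpret Ps: bounded_linear Ps by (rule lins)
  have cm: "\<forall>\<omega>\<in>space P. (\<forall>v\<in>range Pc. hc v \<omega> \<in> range (\<lambda>x. Pu x + Ps x)) \<and>
           (\<exists>L. L-lipschitz_on (range Pc) (\<lambda>v. hc v \<omega>)) \<and> hc 0 \<omega> = 0"
    and cm_meas: "\<forall>v\<in>range Pc. (\<lambda>\<omega>. hc v \<omega>) \<in> borel_measurable P"
    and cm_inf: "\<forall>x. (\<lambda>\<omega>. infdist x (?M \<omega>)) \<in> borel_measurable P"
    and cm_inv: "\<forall>\<omega>\<in>space P. \<forall>t\<ge>0. (\<lambda>x. usol T \<mu> F t x \<omega>) ` ?M \<omega> \<subseteq> ?M (shift t \<omega>)"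
    using Mc_cm unfolding cm_graph_def Let_def by auto
  have shiftP: "shift t \<omega> \<in> space P" if "\<omega> \<in> space P" for t \<omega>
    using wiener that unfolding wiener_shift_space_def by auto
  have ou_m: "ou \<mu> \<in> borel_measurable P" by (rule ou_meas[OF wiener mu])
  have Mscale: "(\<lambda>x. exp (ou \<mu> \<omega>) *\<^sub>R x) ` ?M \<omega> = ?M' \<omega>" for \<omega>
    using graph_scale[OF linc, of "exp (ou \<mu> \<omega>)" "\<lambda>v. hc v \<omega>"] by (simp add: exp_minus)
  have part1: "\<forall>\<omega>\<in>space P. (\<lambda>x. exp (ou \<mu> \<omega>) *\<^sub>R x) ` Mcenter T \<mu> F \<eta> \<omega> = ?M' \<omega>"
    using Mc_graph Mscale by simp
  have part3: "\<forall>\<omega>\<in>space P. \<forall>t\<ge>0.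
         (\<lambda>x. uhat T \<mu> F t x \<omega>) ` ((\<lambda>x. exp (ou \<mu> \<omega>) *\<^sub>R x) ` Mcenter T \<mu> F \<eta> \<omega>)
           \<subseteq> (\<lambda>x. exp (ou \<mu> (shift t \<omega>)) *\<^sub>R x) ` Mcenter T \<mu> F \<eta> (shift t \<omega>)"
  proof (intro ballI allI impI subsetI)
    fix \<omega> t x assume om: "\<omega> \<in> space P" and t: "0 \<le> t"
      and x: "x \<in> (\<lambda>x. uhat T \<mu> F t x \<omega>) ` ((\<lambda>x. exp (ou \<mu> \<omega>) *\<^sub>R x) ` Mcenter T \<mu> F \<eta> \<omega>)"
    then obtain u0 where u0: "u0 \<in> Mcenter T \<mu> F \<eta> \<omega>" and xe: "x = uhat T \<mu> F t (exp (ou \<mu> \<omega>) *\<^sub>R u0) \<omega>"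
      by auto
    have "x = exp (ou \<mu> (shift t \<omega>)) *\<^sub>R usol T \<mu> F t u0 \<omega>"
    proof -
      have "exp (- ou \<mu> \<omega>) *\<^sub>R (exp (ou \<mu> \<omega>) *\<^sub>R u0) = u0"
        by (simp add: exp_minus)
      then show ?thesis unfolding xe uhat_def by simp
    qed
    moreover have "usol T \<mu> F t u0 \<omega> \<in> Mcenter T \<mu> F \<eta> (shift t \<omega>)"
    proof -
      have "u0 \<in> ?M \<omega>" using u0 Mc_graph om by simp
      then have "usol T \<mu> F t u0 \<omega> \<in> ?M (shift t \<omega>)" using cm_inv om t by blast
      then show ?thesis using Mc_graph shiftP[OF om] by simp
    qed
    ultimately show "x \<in> (\<lambda>x. exp (ou \<mu> (shift t \<omega>)) *\<^sub>R x) ` Mcenter T \<mu> F \<eta> (shift t \<omega>)" by blast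
  qed
  have part2: "cm_graph P Pc Pu Ps (uhat T \<mu> F) ?h"
    unfolding cm_graph_def Let_def
  proof (intro conjI ballI allI impI)
    fix \<omega> v assume om: "\<omega> \<in> space P" and v: "v \<in> range Pc"
    from cm om have hr: "\<forall>v\<in>range Pc. hc v \<omega> \<in> range (\<lambda>x. Pu x + Ps x)" by blast
    let ?e = "exp (ou \<mu> \<omega>)"
    have sc: "exp (- ou \<mu> \<omega>) *\<^sub>R v \<in> range Pc"
      using v by (auto simp: Pc.scaleR[symmetric])
    obtain y where "hc (exp (- ou \<mu> \<omega>) *\<^sub>R v) \<omega> = Pu y + Ps y" using hr sc by blast
    then have "?h v \<omega> = Pu (?e *\<^sub>R y) + Ps (?e *\<^sub>R y)"
      by (simp add: Pu.scaleR Ps.scaleR scaleR_add_right)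
    then show "?h v \<omega> \<in> range (\<lambda>x. Pu x + Ps x)" by blast
  next
    fix \<omega> assume om: "\<omega> \<in> space P"
    from cm om obtain L where L: "L-lipschitz_on (range Pc) (\<lambda>v. hc v \<omega>)" by blast
    let ?e = "exp (ou \<mu> \<omega>)"
    have sc: "exp (- ou \<mu> \<omega>) *\<^sub>R v \<in> range Pc" if "v \<in> range Pc" for v
      using that by (auto simp: Pc.scaleR[symmetric])
    show "\<exists>L. L-lipschitz_on (range Pc) (\<lambda>v. ?h v \<omega>)"
    proof (intro exI lipschitz_onI)
      show "0 \<le> L" using L by (rule lipschitz_on_nonneg)
      fix v w assume v: "v \<in> range Pc" and w: "w \<in> range Pc"
      have "dist (?h v \<omega>) (?h w \<omega>) = ?e * dist (hc (exp (- ou \<mu> \<omega>) *\<^sub>R v) \<omega>) (hc (exp (- ou \<mu> \<omega>) *\<^sub>R w) \<omega>)"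
        by (simp add: dist_norm scaleR_diff_right[symmetric])
      also have "\<dots> \<le> ?e * (L * dist (exp (- ou \<mu> \<omega>) *\<^sub>R v) (exp (- ou \<mu> \<omega>) *\<^sub>R w))"
        using lipschitz_onD[OF L sc[OF v] sc[OF w]] by simp
      also have "\<dots> = L * dist v w * (exp (ou \<mu> \<omega>) * exp (- ou \<mu> \<omega>))"
      proof -
        have d: "dist (exp (- ou \<mu> \<omega>) *\<^sub>R v) (exp (- ou \<mu> \<omega>) *\<^sub>R w) = exp (- ou \<mu> \<omega>) * dist v w"
          by (simp add: dist_norm scaleR_diff_right[symmetric])
        show ?thesis unfolding d by (simp only: ac_simps)
      qed
      also have "\<dots> = L * dist v w" by (simp add: exp_minus_inverse)
      finally show "dist (?h v \<omega>) (?h w \<omega>) \<le> L * dist v w" .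
    qed
  next
    fix \<omega> assume om: "\<omega> \<in> space P"
    from cm om have h0: "hc 0 \<omega> = 0" by blast
    show "?h 0 \<omega> = 0" using h0 by simp
  next
    fix v assume v: "v \<in> range Pc"
    have sc: "q *\<^sub>R v \<in> range Pc" for q
      using v by (auto simp: Pc.scaleR[symmetric])
    have "(\<lambda>\<omega>. (\<lambda>q \<omega>. hc (q *\<^sub>R v) \<omega>) (exp (- ou \<mu> \<omega>)) \<omega>) \<in> borel_measurable P"
    proof (rule meas_ray)
      show "(\<lambda>\<omega>. exp (- ou \<mu> \<omega>)) \<in> borel_measurable P" using ou_m by measurable
      fix q show "(\<lambda>\<omega>. hc (q *\<^sub>R v) \<omega>) \<in> borel_measurable P" using cm_meas sc by blast
    next
      fix \<omega> assume om: "\<omega> \<in> space P"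
      from cm om obtain L where L: "L-lipschitz_on (range Pc) (\<lambda>v. hc v \<omega>)" by blast
      have "continuous_on (range Pc) (\<lambda>v. hc v \<omega>)" by (rule lipschitz_on_continuous_on[OF L])
      then show "continuous_on UNIV (\<lambda>q. hc (q *\<^sub>R v) \<omega>)"
        by (rule continuous_on_compose2[where f="\<lambda>q. q *\<^sub>R v"]) (auto intro!: continuous_intros simp: sc)
    qed
    then have m: "(\<lambda>\<omega>. hc (exp (- ou \<mu> \<omega>) *\<^sub>R v) \<omega>) \<in> borel_measurable P" by simp
    have e: "(\<lambda>\<omega>. exp (ou \<mu> \<omega>)) \<in> borel_measurable P" using ou_m by measurable
    show "(\<lambda>\<omega>. ?h v \<omega>) \<in> borel_measurable P"
    proof -
      have "(\<lambda>\<omega>. (\<lambda>q \<omega>. q *\<^sub>R hc (exp (- ou \<mu> \<omega>) *\<^sub>R v) \<omega>) (exp (ou \<mu> \<omega>)) \<omega>) \<in> borel_measurable P"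
      proof (rule meas_ray[OF e])
        fix q
        have "(\<lambda>y::'a. q *\<^sub>R y) \<in> borel_measurable borel"
          by (rule borel_measurable_continuous_onI) (intro continuous_intros)
        then show "(\<lambda>\<omega>. q *\<^sub>R hc (exp (- ou \<mu> \<omega>) *\<^sub>R v) \<omega>) \<in> borel_measurable P"
          using measurable_compose[OF m] by blast
      next
        fix \<omega> show "continuous_on UNIV (\<lambda>q. q *\<^sub>R hc (exp (- ou \<mu> \<omega>) *\<^sub>R v) \<omega>)"
          by (intro continuous_intros)
      qed
      then show ?thesis by simp
    qed
  next
    fix x :: 'a
    have eq: "infdist x (?M' \<omega>) = exp (ou \<mu> \<omega>) * infdist (exp (- ou \<mu> \<omega>) *\<^sub>R x) (?M \<omega>)" for \<omega>
    proof -
      have "infdist x (?M' \<omega>) = infdist (exp (ou \<mu> \<omega>) *\<^sub>R (exp (- ou \<mu> \<omega>) *\<^sub>R x)) ((\<lambda>x. exp (ou \<mu> \<omega>) *\<^sub>R x) ` ?M \<omega>)"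
        by (simp add: Mscale exp_minus)
      also have "\<dots> = exp (ou \<mu> \<omega>) * infdist (exp (- ou \<mu> \<omega>) *\<^sub>R x) (?M \<omega>)"
        by (rule infdist_scale) simp
      finally show ?thesis .
    qed
    have "(\<lambda>\<omega>. (\<lambda>q \<omega>. infdist (q *\<^sub>R x) (?M \<omega>)) (exp (- ou \<mu> \<omega>)) \<omega>) \<in> borel_measurable P"
    proof (rule meas_ray[where c="\<lambda>\<omega>. exp (- ou \<mu> \<omega>)" and f="\<lambda>q \<omega>. infdist (q *\<^sub>R x) (?M \<omega>)"])
      show "(\<lambda>\<omega>. exp (- ou \<mu> \<omega>)) \<in> borel_measurable P" using ou_m by measurable
      fix q show "(\<lambda>\<omega>. infdist (q *\<^sub>R x) (?M \<omega>)) \<in> borel_measurable P" using cm_inf by blast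
    next
      fix \<omega> show "continuous_on UNIV (\<lambda>q. infdist (q *\<^sub>R x) (?M \<omega>))"
        by (intro continuous_intros)
    qed
    then have m: "(\<lambda>\<omega>. infdist (exp (- ou \<mu> \<omega>) *\<^sub>R x) (?M \<omega>)) \<in> borel_measurable P" by simp
    have e: "(\<lambda>\<omega>. exp (ou \<mu> \<omega>)) \<in> borel_measurable P" using ou_m by measurable
    have "(\<lambda>\<omega>. exp (ou \<mu> \<omega>) * infdist (exp (- ou \<mu> \<omega>) *\<^sub>R x) (?M \<omega>)) \<in> borel_measurable P"
      by (rule borel_measurable_times[OF e m])
    then show "(\<lambda>\<omega>. infdist x (?M' \<omega>)) \<in> borel_measurable P" by (simp add: eq)
  next
    fix \<omega> and t :: real assume om: "\<omega> \<in> space P" and t: "0 \<le> t"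
    show "(\<lambda>x. uhat T \<mu> F t x \<omega>) ` ?M' \<omega> \<subseteq> ?M' (shift t \<omega>)"
    proof -
      have "?M' \<omega> = (\<lambda>x. exp (ou \<mu> \<omega>) *\<^sub>R x) ` Mcenter T \<mu> F \<eta> \<omega>" using part1 om by simp
      moreover have "?M' (shift t \<omega>) = (\<lambda>x. exp (ou \<mu> (shift t \<omega>)) *\<^sub>R x) ` Mcenter T \<mu> F \<eta> (shift t \<omega>)"
        using part1 shiftP[OF om] by simp
      ultimately show ?thesis using part3 om t by simp
    qed
  qed
  show ?thesis using part1 part2 part3 by blast
qed

end
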